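(* Suppose $\|\mathbf{T} - \mathbf{T}_0\|_\infty \leq \frac{\pi_{\min}}{\gamma_1}$. Then \begin{gather*} \max_i |\boldsymbol{\pi}(i) - \boldsymbol{\pi}_0(i)| \leq \frac{\pi_{\min}}{2}, \quad \min_i \boldsymbol{\pi}_0(i) \geq \frac{\pi_{\min}}{2}, \quad \max_i \boldsymbol{\pi}_0(i) \leq \pi_{\max} + \frac{\pi_{\min}}{2},\\ \max_i |\boldsymbol{\pi}(i)^{-\frac{1}{2}} - \boldsymbol{\pi}_0(i)^{-\frac{1}{2}}| \leq (\sqrt{2}-1) \gamma_1 \pi_{\min}^{-\frac{3}{2}} \|\mathbf{T} - \mathbf{T}_0\|_\infty,\\ \max_i |\boldsymbol{\pi}(i)^{\frac{1}{2}} - \boldsymbol{\pi}_0(i)^{\frac{1}{2}}| \leq (1-\tfrac{\sqrt{2}}{2}) \gamma_1 \pi_{\min}^{-\frac{1}{2}} \|\mathbf{T} - \mathbf{T}_0\|_\infty. \end{gather*}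
   Context: Let $\mathbf{T},\mathbf{T}_0\in\mathbb{R}^{s\times s}$ be Markov matrices with stationary distributions $\boldsymbol{\pi},\boldsymbol{\pi}_0\in\mathbb{R}^{s}$. Let $\gamma_1:=\sum_{i=2}^s\frac{1}{1-\lambda_i(\mathbf{T})}$, where $\lambda_i$ is the $i$-th largest eigenvalue; it is known that $\|\boldsymbol{\pi}-\boldsymbol{\pi}_0\|_1\le\gamma_1\|\mathbf{T}-\mathbf{T}_0\|_\infty$. Let $\pi_{\min}:=\min_i\boldsymbol{\pi}(i)$ and $\pi_{\max}:=\max_i\boldsymbol{\pi}(i)$. *)

theory Defs
  imports Complex_Main "Jordan_Normal_Form.Char_Poly"
begin

definition markov_matrix :: "nat \<Rightarrow> real mat \<Rightarrow> bool" where
  "markov_matrix s T \<longleftrightarrow> T \<in> carrier_mat s s \<and>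
     (\<forall>i<s. \<forall>j<s. T $$ (i,j) \<ge> 0) \<and> (\<forall>i<s. (\<Sum>j<s. T $$ (i,j)) = 1)"

definition stationary_dist :: "nat \<Rightarrow> real mat \<Rightarrow> (nat \<Rightarrow> real) \<Rightarrow> bool" where
  "stationary_dist s T p \<longleftrightarrow> (\<forall>i<s. p i \<ge> 0) \<and> (\<Sum>i<s. p i) = 1 \<and>
     (\<forall>j<s. (\<Sum>i<s. p i * T $$ (i,j)) = p j)"

definition mat_inf_norm :: "nat \<Rightarrow> real mat \<Rightarrow> real" where
  "mat_inf_norm s A = Max ((\<lambda>i. \<Sum>j<s. \<bar>A $$ (i,j)\<bar>) ` {..<s})"

text \<open>The list lams enumerates the (real) eigenvalues of T with algebraic
  multiplicity, in non-increasing order: lams!0 = lambda_1 >= lambda_2 >= ...\<close>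
definition sorted_eigenvalues :: "nat \<Rightarrow> real mat \<Rightarrow> real list \<Rightarrow> bool" where
  "sorted_eigenvalues s T lams \<longleftrightarrow> length lams = s \<and> sorted (rev lams) \<and>
     char_poly T = (\<Prod>l\<leftarrow>lams. [:- l, 1:])"

text \<open>gamma_1 = sum_{i=2}^s 1/(1 - lambda_i) (0-based: indices 1..s-1).\<close>
definition gamma1 :: "nat \<Rightarrow> real list \<Rightarrow> real" where
  "gamma1 s lams = (\<Sum>i\<in>{1..<s}. 1 / (1 - lams ! i))"

definition pmin :: "nat \<Rightarrow> (nat \<Rightarrow> real) \<Rightarrow> real" where
  "pmin s p = Min (p ` {..<s})"

definition pmax :: "nat \<Rightarrow> (nat \<Rightarrow> real) \<Rightarrow> real" where
  "pmax s p = Max (p ` {..<s})"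

end

theory Submission
  imports Defs
begin

lemma powr_m12: "(a::real) > 0 \<Longrightarrow> a powr (-1/2) = 1 / sqrt a"
  by (simp add: powr_minus_divide powr_half_sqrt)
lemma powr_m32: "(a::real) > 0 \<Longrightarrow> a powr (-3/2) = 1 / (a * sqrt a)"
proof -
  assume a: "a > 0"
  have e3: "(3/2::real) = 1 + 1/2" by simp
  have "a powr (3/2) = a powr 1 * a powr (1/2)" unfolding e3 by (rule powr_add)
  also have "\<dots> = a * sqrt a" using a by (simp add: powr_half_sqrt)
  finally show ?thesis by (simp add: powr_minus_divide)
qed

lemma inv_sqrt_bound:
  fixes a b m e :: real
  assumes m: "m > 0" and am: "a \<ge> m" and bm: "b \<ge> m/2" and e: "\<bar>a - b\<bar> \<le> e"
  shows "\<bar>1/sqrt a - 1/sqrt b\<bar> \<le> 2 * (sqrt 2 - 1) * e / (m * sqrt m)"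
proof -
  define x where "x = sqrt a"
  define y where "y = sqrt b"
  define r where "r = sqrt m"
  define c where "c = sqrt 2"
  have c2: "c * c = 2" and c0: "c > 0" unfolding c_def by auto
  have r0: "r > 0" unfolding r_def using m by auto
  have xr: "x \<ge> r" unfolding x_def r_def using am by auto
  have "sqrt (m/2) = r / c" unfolding r_def c_def by (simp add: real_sqrt_divide)
  then have yr: "y \<ge> r / c" unfolding y_def using bm real_sqrt_le_mono by metis
  have x0: "x > 0" using xr r0 by linarith
  have rc: "r / c > 0" using r0 c0 by simp
  have y0: "y > 0" using yr rc by linarith
  have a2: "a = x*x" unfolding x_def using am m by simp
  have b2: "b = y*y" unfolding y_def using bm m by simp
  have mr: "m = r*r" unfolding r_def using m by simp
  have "\<bar>1/x - 1/y\<bar> = \<bar>x - y\<bar> / (x*y)" using x0 y0 by (simp add: field_simps abs_div)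
  have key: "r*r*r \<le> 2*(c-1) * (x*y*(x+y))"
  proof -
    have h1: "r * (r/c) \<le> x*y" using xr yr r0 rc by (intro mult_mono) auto
    moreover have h2: "r + r/c \<le> x + y" using xr yr by linarith
    ultimately have "x*y*(x+y) \<ge> (r*(r/c))*(r+r/c)"
      using mult_mono[OF h1 h2] r0 rc x0 y0 by auto
    moreover have "2*(c-1) * ((r*(r/c))*(r+r/c)) = r*r*r"
    proof -
      have "2*(c-1) * ((r*(r/c))*(r+r/c)) = r*r*r * (2*(c-1)*(c+1)/(c*c))"
        using c0 by (simp add: field_simps)
      also have "2*(c-1)*(c+1)/(c*c) = 1"
      proof -
        have q: "(c-1)*(c+1) = 1" using c2 by (simp add: algebra_simps)
        have "2*(c-1)*(c+1) = 2 * ((c-1)*(c+1))" by (simp only: mult.assoc)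
        then show ?thesis using q c2 by simp
      qed
      finally show ?thesis by simp
    qed
    moreover have "c - 1 \<ge> 0" using c_def by (simp add: real_le_rsqrt)
    ultimately show ?thesis
      by (metis mult_left_mono mult_nonneg_nonneg zero_le_numeral)
  qed
  have ab: "\<bar>a - b\<bar> = \<bar>x - y\<bar> * (x+y)"
  proof -
    have "a - b = (x-y)*(x+y)" using a2 b2 by (simp add: algebra_simps)
    then show ?thesis using x0 y0 by (simp add: abs_mult)
  qed
  have "\<bar>1/x - 1/y\<bar> = \<bar>y - x\<bar> / (x*y)" using x0 y0 by (simp add: field_simps abs_div)
  also have "\<dots> = \<bar>a - b\<bar> / (x*y*(x+y))"
    using x0 y0 ab by (simp add: abs_minus_commute)
  also have "\<dots> \<le> e / (x*y*(x+y))"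
    using e x0 y0 by (intro divide_right_mono) auto
  also have "\<dots> \<le> 2*(c-1)*e / (r*r*r)"
  proof -
    have e0: "e \<ge> 0" using e by linarith
    have "e * (r*r*r) \<le> e * (2*(c-1) * (x*y*(x+y)))" using key e0 by (rule mult_left_mono)
    then have "e * (r*r*r) \<le> 2*(c-1)*e * (x*y*(x+y))" by (simp add: algebra_simps)
    moreover have "x*y*(x+y) > 0" "r*r*r > 0" using x0 y0 r0 by auto
    ultimately show ?thesis by (simp add: frac_le_eq divide_le_eq le_divide_eq)
  qed
  finally show ?thesis unfolding x_def y_def c_def r_def using m
    by (simp add: mult.assoc)
qed

lemma sqrt_bound:
  fixes a b m e :: real
  assumes m: "m > 0" and am: "a \<ge> m" and bm: "b \<ge> m/2" and e: "\<bar>a - b\<bar> \<le> e"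
  shows "\<bar>sqrt a - sqrt b\<bar> \<le> 2 * (1 - sqrt 2 / 2) * e / sqrt m"
proof -
  define x where "x = sqrt a"
  define y where "y = sqrt b"
  define r where "r = sqrt m"
  define c where "c = sqrt 2"
  have c2: "c * c = 2" and c0: "c > 0" unfolding c_def by auto
  have r0: "r > 0" unfolding r_def using m by auto
  have xr: "x \<ge> r" unfolding x_def r_def using am by auto
  have "sqrt (m/2) = r / c" unfolding r_def c_def by (simp add: real_sqrt_divide)
  then have yr: "y \<ge> r / c" unfolding y_def using bm real_sqrt_le_mono by metis
  have x0: "x > 0" using xr r0 by linarith
  have rc: "r / c > 0" using r0 c0 by simp
  have y0: "y > 0" using yr rc by linarith
  have a2: "a = x*x" unfolding x_def using am m by simp
  have b2: "b = y*y" unfolding y_def using bm m by simp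
  have key: "r \<le> 2*(1 - c/2) * (x+y)"
  proof -
    have "x + y \<ge> r + r/c" using xr yr by linarith
    moreover have "2*(1-c/2)*(r + r/c) = r"
    proof -
      have "2*(1-c/2)*(r + r/c) = r * ((2-c)*(c+1)/c)"
        using c0 by (simp add: field_simps)
      also have "(2-c)*(c+1)/c = 1"
      proof -
        have q: "(2-c)*(c+1) = c" using c2 by (simp add: algebra_simps)
        show ?thesis using q c0 by simp
      qed
      finally show ?thesis by simp
    qed
    moreover have "1 - c/2 \<ge> 0" using c_def real_sqrt_le_mono[of 2 4] by simp
    ultimately show ?thesis
      by (metis mult_left_mono mult_nonneg_nonneg zero_le_numeral)
  qed
  have ab: "\<bar>a - b\<bar> = \<bar>x - y\<bar> * (x+y)"
  proof -
    have "a - b = (x-y)*(x+y)" using a2 b2 by (simp add: algebra_simps)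
    then show ?thesis using x0 y0 by (simp add: abs_mult)
  qed
  have "\<bar>x - y\<bar> = \<bar>a - b\<bar> / (x+y)"
    using x0 y0 ab by simp
  also have "\<dots> \<le> e / (x+y)"
    using e x0 y0 by (intro divide_right_mono) auto
  also have "\<dots> \<le> 2*(1-c/2)*e / r"
  proof -
    have e0: "e \<ge> 0" using e by linarith
    have "e * r \<le> e * (2*(1-c/2) * (x+y))" using key e0 by (rule mult_left_mono)
    then have "e * r \<le> 2*(1-c/2)*e * (x+y)" by (simp add: algebra_simps)
    moreover have "x+y > 0" "r > 0" using x0 y0 r0 by auto
    ultimately show ?thesis by (simp add: frac_le_eq divide_le_eq le_divide_eq)
  qed
  finally show ?thesis unfolding x_def y_def c_def r_def .
qed

theorem corollary1:
  fixes s :: nat and T T0 :: "real mat" and p p0 :: "nat \<Rightarrow> real" and lams :: "real list"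
  assumes "markov_matrix s T" and "markov_matrix s T0"
    and "stationary_dist s T p" and "stationary_dist s T0 p0"
    and "sorted_eigenvalues s T lams"
    and known: "(\<Sum>i<s. \<bar>p i - p0 i\<bar>) \<le> gamma1 s lams * mat_inf_norm s (T - T0)"
    and small: "mat_inf_norm s (T - T0) \<le> pmin s p / gamma1 s lams"
  shows "Max ((\<lambda>i. \<bar>p i - p0 i\<bar>) ` {..<s}) \<le> pmin s p / 2 \<and>
    pmin s p0 \<ge> pmin s p / 2 \<and>
    pmax s p0 \<le> pmax s p + pmin s p / 2 \<and>
    Max ((\<lambda>i. \<bar>p i powr (-1/2) - p0 i powr (-1/2)\<bar>) ` {..<s})
           \<le> (sqrt 2 - 1) * gamma1 s lams * pmin s p powr (-3/2) * mat_inf_norm s (T - T0) \<and>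
    Max ((\<lambda>i. \<bar>p i powr (1/2) - p0 i powr (1/2)\<bar>) ` {..<s})
           \<le> (1 - sqrt 2 / 2) * gamma1 s lams * pmin s p powr (-1/2) * mat_inf_norm s (T - T0)"
proof -
  define N where "N = mat_inf_norm s (T - T0)"
  define g where "g = gamma1 s lams"
  define m where "m = pmin s p"
  define D where "D = g * N"
  have st: "(\<forall>i<s. p i \<ge> 0) \<and> (\<Sum>i<s. p i) = 1" using assms(3) unfolding stationary_dist_def by blast
  have st0: "(\<forall>i<s. p0 i \<ge> 0) \<and> (\<Sum>i<s. p0 i) = 1" using assms(4) unfolding stationary_dist_def by blast
  have s0: "s > 0" using st by (cases s) auto
  have ne: "{..<s} \<noteq> {}" using s0 by auto
  have mle: "\<And>i. i < s \<Longrightarrow> m \<le> p i" unfolding m_def pmin_def by (intro Min_le) auto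
  have m0: "m \<ge> 0" unfolding m_def pmin_def using ne st by (subst Min_ge_iff) auto
  have N0: "N \<ge> 0"
  proof -
    have "0 \<le> (\<Sum>j<s. \<bar>(T - T0) $$ (0,j)\<bar>)" by (simp add: sum_nonneg)
    also have "\<dots> \<le> N" unfolding N_def mat_inf_norm_def using s0 by (intro Max_ge) auto
    finally show ?thesis .
  qed
  have Dm: "D \<le> m"
  proof (cases "g > 0")
    case True
    then show ?thesis using small unfolding D_def N_def g_def m_def
      by (simp add: pos_le_divide_eq mult.commute)
  next
    case False
    then have "D \<le> 0" unfolding D_def using N0 by (simp add: mult_nonpos_nonneg)
    then show ?thesis using m0 by linarith
  qed
  have sumd: "(\<Sum>i<s. p i - p0 i) = 0" using st st0 by (simp add: sum_subtractf)
  have dbound: "\<bar>p i - p0 i\<bar> \<le> D/2" if i: "i < s" for i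
  proof -
    have f: "finite {..<s}" by simp
    have "(\<Sum>j<s. p j - p0 j) = (p i - p0 i) + (\<Sum>j\<in>{..<s}-{i}. p j - p0 j)"
      using i by (subst sum.remove[OF f, of i]) auto
    then have "p i - p0 i = - (\<Sum>j\<in>{..<s}-{i}. p j - p0 j)" using sumd by linarith
    then have "\<bar>p i - p0 i\<bar> \<le> (\<Sum>j\<in>{..<s}-{i}. \<bar>p j - p0 j\<bar>)"
      by (metis abs_minus_cancel sum_abs)
    moreover have "(\<Sum>j<s. \<bar>p j - p0 j\<bar>) = \<bar>p i - p0 i\<bar> + (\<Sum>j\<in>{..<s}-{i}. \<bar>p j - p0 j\<bar>)"
      using i by (subst sum.remove[OF f, of i]) auto
    ultimately show ?thesis using known unfolding D_def g_def N_def by linarith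
  qed
  have dm: "\<bar>p i - p0 i\<bar> \<le> m/2" if "i < s" for i using dbound[OF that] Dm by linarith
  have P1: "Max ((\<lambda>i. \<bar>p i - p0 i\<bar>) ` {..<s}) \<le> m / 2"
    using ne dm by (subst Max_le_iff) auto
  have p0m: "p0 i \<ge> m/2" if "i < s" for i using dm[OF that] mle[OF that] by linarith
  have P2: "pmin s p0 \<ge> m / 2"
    unfolding pmin_def using ne p0m by (subst Min_ge_iff) auto
  have pM: "p i \<le> pmax s p" if "i < s" for i unfolding pmax_def using that by (intro Max_ge) auto
  have P3: "pmax s p0 \<le> pmax s p + m / 2"
  proof -
    have "p0 i \<le> pmax s p + m / 2" if "i < s" for i using dm[OF that] pM[OF that] by linarith
    then show ?thesis unfolding pmax_def[of s p0] using ne by (subst Max_le_iff) auto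
  qed
  have P4: "Max ((\<lambda>i. \<bar>p i powr (-1/2) - p0 i powr (-1/2)\<bar>) ` {..<s})
           \<le> (sqrt 2 - 1) * g * m powr (-3/2) * N"
  proof (subst Max_le_iff, simp, simp add: ne, intro ballI, elim imageE)
    fix x i assume x: "x = \<bar>p i powr (-1/2) - p0 i powr (-1/2)\<bar>" and i: "i \<in> {..<s}"
    then have i: "i < s" by simp
    show "x \<le> (sqrt 2 - 1) * g * m powr (-3/2) * N"
    proof (cases "m = 0")
      case True
      then have "D = 0" using Dm dbound[OF i] by linarith
      then have "p i = p0 i" using dbound[OF i] by simp
      then show ?thesis using x `D = 0` unfolding D_def by (cases "g = 0") auto
    next
      case False
      then have mp: "m > 0" using m0 by simp
      have a0: "p i > 0" using mle[OF i] mp by linarith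
      have b0: "p0 i > 0" using p0m[OF i] mp by linarith
      have "x = \<bar>1/sqrt (p i) - 1/sqrt (p0 i)\<bar>" using x a0 b0 by (simp add: powr_minus_divide powr_half_sqrt)
      also have "\<dots> \<le> 2 * (sqrt 2 - 1) * (D/2) / (m * sqrt m)"
        using inv_sqrt_bound[OF mp mle[OF i] p0m[OF i] dbound[OF i]] .
      also have "\<dots> = (sqrt 2 - 1) * g * m powr (-3/2) * N"
        using mp unfolding D_def powr_m32[OF mp] by (simp add: field_simps)
      finally show ?thesis .
    qed
  qed
  have P5: "Max ((\<lambda>i. \<bar>p i powr (1/2) - p0 i powr (1/2)\<bar>) ` {..<s})
           \<le> (1 - sqrt 2 / 2) * g * m powr (-1/2) * N"
  proof (subst Max_le_iff, simp, simp add: ne, intro ballI, elim imageE)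
    fix x i assume x: "x = \<bar>p i powr (1/2) - p0 i powr (1/2)\<bar>" and i: "i \<in> {..<s}"
    then have i: "i < s" by simp
    show "x \<le> (1 - sqrt 2 / 2) * g * m powr (-1/2) * N"
    proof (cases "m = 0")
      case True
      then have "D = 0" using Dm dbound[OF i] by linarith
      then have "p i = p0 i" using dbound[OF i] by simp
      then show ?thesis using x `D = 0` unfolding D_def by (cases "g = 0") auto
    next
      case False
      then have mp: "m > 0" using m0 by simp
      have a0: "p i > 0" using mle[OF i] mp by linarith
      have b0: "p0 i > 0" using p0m[OF i] mp by linarith
      have "x = \<bar>sqrt (p i) - sqrt (p0 i)\<bar>" using x a0 b0 by (simp add: powr_half_sqrt)
      also have "\<dots> \<le> 2 * (1 - sqrt 2 / 2) * (D/2) / sqrt m"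
        using sqrt_bound[OF mp mle[OF i] p0m[OF i] dbound[OF i]] .
      also have "\<dots> = (1 - sqrt 2 / 2) * g * m powr (-1/2) * N"
        using mp unfolding D_def powr_m12[OF mp] by (simp add: field_simps)
      finally show ?thesis .
    qed
  qed
  show ?thesis using P1 P2 P3 P4 P5 unfolding m_def g_def N_def by blast
qed

end
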